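(* Let $p\in\{2,3\}$. Then for every integer $d\ge 1$, the directed graph $G_d$ is connected (as an undirected graph).
   Context: Fix a prime $p$ and an integer $d\ge1$. Let $\Omega_d$ be the set of partitions (unordered multisets) of $d+2$ into positive integers $e_1,e_2,\ldots$ with each $e_j\not\equiv 1\pmod p$. For $\vec E,\vec E'\in\Omega_d$ write $\vec E\prec\vec E'$ if $\vec E'$ is a refinement of $\vec E$ (i.e. $\vec E'$ is obtained by replacing each entry of $\vec E$ by a multiset of positive integers summing to it). $G_d$ is the directed graph with vertex set $\Omega_d$ and an edge from $\vec E$ to $\vec E'$ if and only if $\vec E\prec\vec E'$, $\vec E\neq\vec E'$, and there is no partition in $\Omega_d$ lying strictly between them. *)

theory Defs
  imports Main "HOL-Library.Multiset" "HOL-Computational_Algebra.Primes"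
begin

definition Omega :: "nat \<Rightarrow> nat \<Rightarrow> nat multiset set" where
  "Omega p d = {E. (\<forall>e \<in># E. 0 < e \<and> e mod p \<noteq> 1 mod p) \<and> sum_mset E = d + 2}"

definition refines :: "nat multiset \<Rightarrow> nat multiset \<Rightarrow> bool" where
  "refines E E' \<longleftrightarrow> (\<exists>F :: nat multiset multiset.
      image_mset sum_mset F = E \<and>
      (\<forall>M \<in># F. M \<noteq> {#} \<and> (\<forall>x \<in># M. 0 < x)) \<and>
      sum_mset F = E')"

definition G_edges :: "nat \<Rightarrow> nat \<Rightarrow> (nat multiset \<times> nat multiset) set" where
  "G_edges p d = {(E, E'). E \<in> Omega p d \<and> E' \<in> Omega p d \<and> refines E E' \<and> E \<noteq> E' \<and>
      \<not> (\<exists>E'' \<in> Omega p d. refines E E'' \<and> refines E'' E' \<and> E'' \<noteq> E \<and> E'' \<noteq> E')}"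

definition G_connected :: "nat \<Rightarrow> nat \<Rightarrow> bool" where
  "G_connected p d \<longleftrightarrow>
     (\<forall>E \<in> Omega p d. \<forall>E' \<in> Omega p d. (E, E') \<in> (G_edges p d \<union> (G_edges p d)\<inverse>)\<^sup>*)"

end

theory Submission
  imports Defs
begin

lemma sum_single_mset: "sum_mset (image_mset (\<lambda>x. {#x#}) X) = X"
  by (induction X) auto

lemma img_comp: "image_mset f (image_mset g M) = image_mset (f \<circ> g) M"
  by (induction M) auto

lemma img_single: "image_mset sum_mset (image_mset (\<lambda>x. {#x#}) (X::nat multiset)) = X"
  by (induction X) auto

lemma rep_single: "set_mset N \<subseteq> {c} \<Longrightarrow> N = replicate_mset (size N) c"
  by (induction N) auto

lemma sum_sum_mset: "sum_mset (sum_mset (F :: nat multiset multiset)) = sum_mset (image_mset sum_mset F)"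
  by (induction F) auto

lemma refines_split:
  assumes "\<And>e. e \<in># E \<Longrightarrow> sum_mset (f e) = e \<and> f e \<noteq> {#} \<and> (\<forall>x\<in># f e. 0 < x)"
  shows "refines E (sum_mset (image_mset f E))"
  unfolding refines_def
proof (intro exI[of _ "image_mset f E"] conjI)
  have "image_mset (sum_mset \<circ> f) E = image_mset id E"
    by (rule image_mset_cong) (use assms in auto)
  then show "image_mset sum_mset (image_mset f E) = E" by (simp add: img_comp)
qed (use assms in auto)

lemma refines_add:
  assumes "sum_mset M = e" "M \<noteq> {#}" "\<forall>x\<in>#M. 0 < x" "\<forall>x\<in>#X. 0 < x"
  shows "refines (add_mset e X) (M + X)"
  unfolding refines_def
  apply (rule exI[of _ "add_mset M (image_mset (\<lambda>x. {#x#}) X)"])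
  using assms by (auto simp: sum_single_mset img_single)

lemma size_lt_aux:
  assumes "\<forall>M\<in>#F. 1 \<le> g M" "\<exists>M\<in>#F. 2 \<le> g M"
  shows "size F < sum_mset (image_mset g F)"
  using assms
proof (induction F)
  case empty then show ?case by simp
next
  case (add x F)
  have "size F \<le> sum_mset (image_mset g F)"
    using add.prems(1) by (induction F) (auto intro: add_mono)
  then show ?case using add by fastforce
qed

lemma all_single_sum:
  assumes "\<forall>M\<in>#F. size M = (1::nat)"
  shows "sum_mset F = image_mset sum_mset (F :: nat multiset multiset)"
  using assms
proof (induction F)
  case (add M F)
  then obtain a where "M = {#a#}" using size_1_singleton_mset by auto
  with add show ?case by auto
qed simp

lemma refines_size:
  assumes "refines E E'" "E \<noteq> E'"
  shows "size E < size E'"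
proof -
  obtain F where F: "image_mset sum_mset F = E" "\<forall>M\<in>#F. M \<noteq> {#} \<and> (\<forall>x\<in>#M. 0 < x)"
    "sum_mset F = E'" using assms(1) unfolding refines_def by blast
  have ne: "\<forall>M\<in>#F. 1 \<le> size M" using F(2) by (auto simp: Suc_le_eq nonempty_has_size)
  have "\<exists>M\<in>#F. 2 \<le> size M"
  proof (rule ccontr)
    assume "\<not> ?thesis"
    then have "\<forall>M\<in>#F. size M = 1" using ne by fastforce
    then have "E' = E" using F all_single_sum by metis
    then show False using assms by simp
  qed
  from size_lt_aux[OF ne this] have "size F < sum_mset (image_mset size F)" .
  moreover have "size E' = sum_mset (image_mset size F)" using F(3) by auto
  moreover have "size E = size F" using F(1) by auto
  ultimately show ?thesis by simp
qed

definition Rel :: "nat \<Rightarrow> nat \<Rightarrow> (nat multiset \<times> nat multiset) set" where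
  "Rel p d = (G_edges p d \<union> (G_edges p d)\<inverse>)\<^sup>*"

lemma Rel_sym: "(x, y) \<in> Rel p d \<Longrightarrow> (y, x) \<in> Rel p d"
proof -
  assume "(x, y) \<in> Rel p d"
  then have "(y, x) \<in> ((G_edges p d \<union> (G_edges p d)\<inverse>)\<inverse>)\<^sup>*"
    unfolding Rel_def by (rule rtrancl_converseI)
  then show ?thesis unfolding Rel_def by (simp add: converse_Un sup_commute)
qed

lemma Rel_trans: "(x, y) \<in> Rel p d \<Longrightarrow> (y, z) \<in> Rel p d \<Longrightarrow> (x, z) \<in> Rel p d"
  unfolding Rel_def by (rule rtrancl_trans)

lemma chain:
  assumes "E \<in> Omega p d" "E' \<in> Omega p d" "refines E E'"
  shows "(E, E') \<in> Rel p d"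
  using assms
proof (induction "size E' - size E" arbitrary: E E' rule: less_induct)
  case less
  show ?case
  proof (cases "E = E'")
    case True then show ?thesis unfolding Rel_def by simp
  next
    case False
    show ?thesis
    proof (cases "\<exists>E'' \<in> Omega p d. refines E E'' \<and> refines E'' E' \<and> E'' \<noteq> E \<and> E'' \<noteq> E'")
      case True
      then obtain E'' where E'': "E'' \<in> Omega p d" "refines E E''" "refines E'' E'" "E'' \<noteq> E" "E'' \<noteq> E'"
        by blast
      have s1: "size E < size E''" using refines_size E'' by metis
      have s2: "size E'' < size E'" using refines_size E'' by metis
      have "(E, E'') \<in> Rel p d" using less.hyps[of E'' E] s1 s2 E'' less.prems by simp
      moreover have "(E'', E') \<in> Rel p d" using less.hyps[of E' E''] s1 s2 E'' less.prems by simp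
      ultimately show ?thesis by (rule Rel_trans)
    next
      case nb: False
      then have "(E, E') \<in> G_edges p d" using less.prems False unfolding G_edges_def by blast
      then show ?thesis unfolding Rel_def by blast
    qed
  qed
qed

lemma Omega_pos: "E \<in> Omega p d \<Longrightarrow> x \<in># E \<Longrightarrow> 0 < x"
  unfolding Omega_def by auto

definition split2 :: "nat \<Rightarrow> nat multiset" where
  "split2 e = replicate_mset (e div 2) 2"

lemma p2_norm:
  assumes "E \<in> Omega 2 d"
  shows "(E, replicate_mset ((d+2) div 2) 2) \<in> Rel 2 d"
proof -
  have el: "\<And>e. e \<in># E \<Longrightarrow> 0 < e \<and> e mod 2 = 0"
    using assms unfolding Omega_def by auto
  have sp: "\<And>e. e \<in># E \<Longrightarrow> sum_mset (split2 e) = e \<and> split2 e \<noteq> {#} \<and> (\<forall>x\<in># split2 e. 0 < x)"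
  proof -
    fix e assume "e \<in># E"
    with el have "0 < e" "e mod 2 = 0" by auto
    then show "sum_mset (split2 e) = e \<and> split2 e \<noteq> {#} \<and> (\<forall>x\<in># split2 e. 0 < x)"
      unfolding split2_def by auto
  qed
  define N where "N = sum_mset (image_mset split2 E)"
  have ref: "refines E N" unfolding N_def by (rule refines_split[OF sp])
  have sumN: "sum_mset N = d + 2"
  proof -
    have "image_mset (sum_mset \<circ> split2) E = image_mset id E"
      by (rule image_mset_cong) (use sp in auto)
    then show ?thesis using assms unfolding N_def Omega_def
      by (simp add: sum_sum_mset img_comp)
  qed
  have setN: "set_mset N \<subseteq> {2}" unfolding N_def split2_def by auto
  then have NN: "N = replicate_mset (size N) 2"
    by (rule rep_single)
  have "sum_mset (replicate_mset (size N) (2::nat)) = size N * 2" by simp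
  then have "sum_mset N = size N * 2" by (simp only: NN[symmetric])
  then have sz: "(d+2) div 2 = size N" using sumN by simp
  have "N = replicate_mset ((d+2) div 2) 2" by (subst sz) (rule NN)
  moreover have "N \<in> Omega 2 d" using setN sumN unfolding Omega_def by auto
  ultimately show ?thesis using chain[OF assms _ ref] by simp
qed

definition split3 :: "nat \<Rightarrow> nat multiset" where
  "split3 e = (if e mod 3 = 0 then replicate_mset (e div 3) 3
     else add_mset 2 (replicate_mset (e div 3) 3))"

definition T :: "nat \<Rightarrow> nat \<Rightarrow> nat multiset" where
  "T a b = replicate_mset a 2 + replicate_mset b 3"

lemma T_Omega: "2 * a + 3 * b = d + 2 \<Longrightarrow> T a b \<in> Omega 3 d"
  unfolding Omega_def T_def by auto

lemma T_step:
  assumes "2 * a + 3 * (b + 2) = d + 2"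
  shows "(T a (b+2), T (a+3) b) \<in> Rel 3 d"
proof -
  define X where "X = T a b"
  have pos: "\<forall>x\<in>#X. 0 < x" unfolding X_def T_def by auto
  have M6: "add_mset 6 X \<in> Omega 3 d" using assms unfolding X_def Omega_def T_def by auto
  have e1: "T a (b+2) = {#3,3#} + X" unfolding X_def T_def by simp
  have e2: "T (a+3) b = {#2,2,2#} + X" unfolding X_def T_def by (simp add: numeral_3_eq_3)
  have r1: "refines (add_mset 6 X) (T a (b+2))" unfolding e1 by (rule refines_add) (use pos in auto)
  have r2: "refines (add_mset 6 X) (T (a+3) b)" unfolding e2 by (rule refines_add) (use pos in auto)
  have o1: "T a (b+2) \<in> Omega 3 d" using assms by (rule T_Omega)
  have o2: "T (a+3) b \<in> Omega 3 d" using assms by (intro T_Omega) simp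
  show ?thesis using chain[OF M6 o1 r1] chain[OF M6 o2 r2] Rel_sym Rel_trans by metis
qed

lemma T_norm:
  "2 * a + 3 * b = d + 2 \<Longrightarrow> (T a b, T (a + 3 * (b div 2)) (b mod 2)) \<in> Rel 3 d"
proof (induction b arbitrary: a rule: less_induct)
  case (less b)
  show ?case
  proof (cases "b < 2")
    case True then show ?thesis unfolding Rel_def by simp
  next
    case False
    then obtain c where c: "b = c + 2" by (metis add.commute le_Suc_ex not_less)
    have st: "(T a b, T (a+3) c) \<in> Rel 3 d" using T_step[of a c d] less.prems c by simp
    have ih: "(T (a+3) c, T (a + 3 + 3 * (c div 2)) (c mod 2)) \<in> Rel 3 d"
      using less.IH[of c "a+3"] less.prems c by simp
    have e: "a + 3 + 3 * (c div 2) = a + 3 * (b div 2)" "c mod 2 = b mod 2" using c by auto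
    have "(T (a+3) c, T (a + 3 * (b div 2)) (b mod 2)) \<in> Rel 3 d" using ih unfolding e .
    then show ?thesis by (rule Rel_trans[OF st])
  qed
qed

lemma T_canon:
  assumes "2 * a + 3 * b = d + 2"
  shows "(T a b, T (((d+2) - 3 * ((d+2) mod 2)) div 2) ((d+2) mod 2)) \<in> Rel 3 d"
proof -
  define q r where "q = b div 2" and "r = b mod 2"
  have b: "b = 2 * q + r" and r: "r < 2" unfolding q_def r_def by auto
  have n: "d + 2 = 2 * (a + 3 * q + r) + r" using assms b by simp
  have m: "(d+2) mod 2 = r" unfolding n using r by presburger
  have k: "((d+2) - 3 * r) div 2 = a + 3 * q" using n by simp
  have "(T a b, T (a + 3 * q) r) \<in> Rel 3 d" using T_norm[OF assms] unfolding q_def r_def .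
  then show ?thesis unfolding m k .
qed

lemma p3_norm:
  assumes "E \<in> Omega 3 d"
  shows "(E, T (((d+2) - 3 * ((d+2) mod 2)) div 2) ((d+2) mod 2)) \<in> Rel 3 d"
proof -
  have el: "\<And>e. e \<in># E \<Longrightarrow> 0 < e \<and> e mod 3 \<noteq> 1"
    using assms unfolding Omega_def by auto
  have sp: "\<And>e. e \<in># E \<Longrightarrow> sum_mset (split3 e) = e \<and> split3 e \<noteq> {#} \<and> (\<forall>x\<in># split3 e. 0 < x)"
  proof -
    fix e assume "e \<in># E"
    with el have "0 < e" "e mod 3 \<noteq> 1" by auto
    then have "e mod 3 = 0 \<or> e mod 3 = 2" by presburger
    moreover have "e mod 3 = 0 \<Longrightarrow> e div 3 \<noteq> 0" using \<open>0 < e\<close> by auto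
    moreover have "e mod 3 = 0 \<Longrightarrow> e div 3 * 3 = e" "e mod 3 = 2 \<Longrightarrow> 2 + e div 3 * 3 = e"
      by presburger+
    ultimately show "sum_mset (split3 e) = e \<and> split3 e \<noteq> {#} \<and> (\<forall>x\<in># split3 e. 0 < x)"
      unfolding split3_def by auto
  qed
  define N where "N = sum_mset (image_mset split3 E)"
  have ref: "refines E N" unfolding N_def by (rule refines_split[OF sp])
  have sumN: "sum_mset N = d + 2"
  proof -
    have "image_mset (sum_mset \<circ> split3) E = image_mset id E"
      by (rule image_mset_cong) (use sp in auto)
    then show ?thesis using assms unfolding N_def Omega_def
      by (simp add: sum_sum_mset img_comp)
  qed
  have setN: "set_mset N \<subseteq> {2,3}" unfolding N_def split3_def by auto
  have NT: "N = T (count N 2) (count N 3)"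
  proof (rule multiset_eqI)
    fix x show "count N x = count (T (count N 2) (count N 3)) x"
      using setN unfolding T_def by (cases "x = 2 \<or> x = 3") (auto simp: not_in_iff[symmetric])
  qed
  have "sum_mset (T (count N 2) (count N 3)) = 2 * count N 2 + 3 * count N 3"
    unfolding T_def by simp
  then have "sum_mset N = 2 * count N 2 + 3 * count N 3" by (simp only: NT[symmetric])
  then have eq: "2 * count N 2 + 3 * count N 3 = d + 2" using sumN by simp
  have "N \<in> Omega 3 d" by (subst NT) (rule T_Omega[OF eq])
  then have "(E, N) \<in> Rel 3 d" using chain[OF assms _ ref] by simp
  moreover have "(N, T (((d+2) - 3 * ((d+2) mod 2)) div 2) ((d+2) mod 2)) \<in> Rel 3 d"
    by (subst NT) (rule T_canon[OF eq])
  ultimately show ?thesis by (rule Rel_trans)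
qed

theorem proposition2p6:
  fixes p d :: nat
  assumes "p \<in> {2, 3}" and "d \<ge> 1"
  shows "G_connected p d"
proof -
  have "\<forall>E\<in>Omega p d. \<forall>E'\<in>Omega p d. (E, E') \<in> Rel p d"
  proof (intro ballI)
    fix E E' assume h: "E \<in> Omega p d" "E' \<in> Omega p d"
    show "(E, E') \<in> Rel p d"
    proof (cases "p = 2")
      case True
      then have h2: "E \<in> Omega 2 d" "E' \<in> Omega 2 d" using h by simp_all
      from p2_norm[OF h2(1)] Rel_sym[OF p2_norm[OF h2(2)]] have "(E, E') \<in> Rel 2 d" by (rule Rel_trans)
      then show ?thesis using \<open>p = 2\<close> by simp
    next
      case False
      then have "p = 3" using assms by auto
      then have h2: "E \<in> Omega 3 d" "E' \<in> Omega 3 d" using h by simp_all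
      from p3_norm[OF h2(1)] Rel_sym[OF p3_norm[OF h2(2)]] have "(E, E') \<in> Rel 3 d" by (rule Rel_trans)
      then show ?thesis using \<open>p = 3\<close> by simp
    qed
  qed
  then show ?thesis unfolding G_connected_def Rel_def by simp
qed

end
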